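(* Let $T$ be a finite tree with $m$ edges, let $u \in V(T)$, $n \in \mathbf{N}$, and $i \in \{1,\ldots,n\}$. Then \[ \sum_{\substack{F \in I(T,n)\\ F(u)=i}} P(T,F) \le C^m . \]
   Context: For each $n \in \mathbf{N}$, $W_n = (w_{ij}^{(n)})_{i,j=1}^n$ is a random $n \times n$ Hermitian matrix whose upper triangular entries (diagonal included) are jointly independent, have mean zero and finite variances. It is assumed that there is a finite constant $C \ge 0$ such that \[ \sum_{j=1}^n \operatorname{Var}\bigl[w_{ij}^{(n)}\bigr] \le C \qquad \text{for all } n = 1,2,\ldots \text{ and } i = 1,\ldots,n. \] Graphs are undirected, may have loops, but have no multiple edges. For a finite graph $G$ and $n \in \mathbf{N}$, $I(G,n)$ denotes the set of all injections from $V(G)$ into $\{1,\ldots,n\}$. For $F \in I(G,n)$, \[ P(G,F) := \prod_{e \in E(G)} \operatorname{Var}\bigl[w_{F(u_e)F(v_e)}^{(n)}\bigr], \] where $u_e, v_e$ are the ends of the edge $e$ (well-defined since $W_n$ is Hermitian); an empty product equals $1$. *)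

theory Defs
  imports "HOL-Probability.Probability"
begin

definition cvariance :: "'a measure \<Rightarrow> ('a \<Rightarrow> complex) \<Rightarrow> real" where
  "cvariance M X = (\<integral>x. (cmod (X x - (\<integral>y. X y \<partial>M)))\<^sup>2 \<partial>M)"

(* Finite graphs (undirected, loops allowed, no multiple edges):
   vertex set V, edge set E of 1- or 2-element subsets of V. *)
definition graph :: "'v set \<Rightarrow> 'v set set \<Rightarrow> bool" where
  "graph V E \<longleftrightarrow> finite V \<and> (\<forall>e\<in>E. e \<subseteq> V \<and> (card e = 1 \<or> card e = 2))"

definition adj :: "'v set set \<Rightarrow> 'v \<Rightarrow> 'v \<Rightarrow> bool" where
  "adj E x y \<longleftrightarrow> {x, y} \<in> E"

definition connected_graph :: "'v set \<Rightarrow> 'v set set \<Rightarrow> bool" where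
  "connected_graph V E \<longleftrightarrow> (\<forall>x\<in>V. \<forall>y\<in>V. (adj E)\<^sup>*\<^sup>* x y)"

definition is_cycle :: "'v set set \<Rightarrow> 'v list \<Rightarrow> bool" where
  "is_cycle E vs \<longleftrightarrow> length vs \<ge> 3 \<and> distinct vs \<and>
     (\<forall>k < length vs - 1. adj E (vs ! k) (vs ! Suc k)) \<and> adj E (last vs) (hd vs)"

definition tree :: "'v set \<Rightarrow> 'v set set \<Rightarrow> bool" where
  "tree V E \<longleftrightarrow> graph V E \<and> V \<noteq> {} \<and> connected_graph V E \<and>
     (\<forall>e\<in>E. card e = 2) \<and> (\<nexists>vs. is_cycle E vs)"

definition injs :: "'v set \<Rightarrow> nat \<Rightarrow> ('v \<Rightarrow> nat) set" where
  "injs V n = {F. F \<in> V \<rightarrow>\<^sub>E {1..n} \<and> inj_on F V}"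

(* P(G,F) = prod over edges e of Var[w_{F(u_e) F(v_e)}]; the two ends are
   ordered as (Min, Max) of the image, which is harmless since W_n is Hermitian *)
definition Pw :: "'a measure \<Rightarrow> (nat \<Rightarrow> nat \<Rightarrow> nat \<Rightarrow> 'a \<Rightarrow> complex) \<Rightarrow> nat
                  \<Rightarrow> 'v set set \<Rightarrow> ('v \<Rightarrow> nat) \<Rightarrow> real" where
  "Pw M W n E F = (\<Prod>e\<in>E. cvariance M (W n (Min (F ` e)) (Max (F ` e))))"

end

theory Submission
  imports Defs
begin

definition ispath where
  "ispath V E u vs \<longleftrightarrow> vs \<noteq> [] \<and> hd vs = u \<and> distinct vs \<and> set vs \<subseteq> V \<and>
     (\<forall>k < length vs - 1. adj E (vs!k) (vs!Suc k))"

lemma adj_sym: "adj E x y = adj E y x" by (simp add: adj_def insert_commute)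

lemma tree_no_loop: "tree V E \<Longrightarrow> \<not> adj E x x"
  unfolding tree_def adj_def by force

lemma tree_adj_in: "tree V E \<Longrightarrow> adj E x y \<Longrightarrow> x \<in> V \<and> y \<in> V"
  unfolding tree_def graph_def adj_def by blast

lemma tree_finite: "tree V E \<Longrightarrow> finite V" "tree V E \<Longrightarrow> finite E"
proof -
  assume T: "tree V E"
  then show fV: "finite V" by (simp add: tree_def graph_def)
  have "E \<subseteq> Pow V" using T by (auto simp: tree_def graph_def)
  then show "finite E" using fV by (meson finite_Pow_iff finite_subset)
qed

lemma rtc_sym: "(adj E)\<^sup>*\<^sup>* x y \<Longrightarrow> (adj E)\<^sup>*\<^sup>* y x"
proof (induction rule: rtranclp_induct)
  case base then show ?case by simp
next
  case (step y z)
  then show ?case by (metis adj_sym converse_rtranclp_into_rtranclp)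
qed

lemma tree_leaf:
  assumes T: "tree V E" and u: "u \<in> V" and v: "v \<in> V" "v \<noteq> u"
  shows "\<exists>l p. l \<in> V \<and> l \<noteq> u \<and> p \<in> V \<and> {l,p} \<in> E \<and> (\<forall>w. adj E l w \<longrightarrow> w = p)"
proof -
  have fin: "finite V" using T by (simp add: tree_def graph_def)
  have "ispath V E u [u]" using u by (simp add: ispath_def)
  moreover have "\<forall>vs. ispath V E u vs \<longrightarrow> length vs < Suc (card V)"
  proof (intro allI impI)
    fix vs assume "ispath V E u vs"
    then have d: "distinct vs" and s: "set vs \<subseteq> V" by (auto simp: ispath_def)
    have "card (set vs) \<le> card V" using card_mono[OF fin s] .
    then show "length vs < Suc (card V)" using distinct_card[OF d] by simp
  qed
  ultimately obtain vs where vs: "ispath V E u vs"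
    and mx: "\<forall>ys. ispath V E u ys \<longrightarrow> length ys \<le> length vs"
    using Lattices_Big.ex_has_greatest_nat[of "ispath V E u" "[u]" length "Suc (card V)"] by blast
  define L where "L = length vs"
  have ne: "vs \<noteq> []" and hd: "hd vs = u" and dist: "distinct vs" and sub: "set vs \<subseteq> V"
    and ad: "\<And>k. k < L - 1 \<Longrightarrow> adj E (vs!k) (vs!Suc k)"
    using vs by (auto simp: ispath_def L_def)
  have L2: "L \<ge> 2"
  proof (rule ccontr)
    assume "\<not> L \<ge> 2"
    moreover have "length vs \<noteq> 0" using ne by simp
    ultimately have "length vs = 1" unfolding L_def by linarith
    then obtain a where "vs = [a]" by (metis One_nat_def length_0_conv length_Suc_conv)
    with hd have vsu: "vs = [u]" by simp
    have "(adj E)\<^sup>*\<^sup>* u v" using T u v by (auto simp: tree_def connected_graph_def)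
    then obtain w where uw: "adj E u w" using v(2) by (cases rule: converse_rtranclpE) auto
    then have "w \<in> V" "w \<noteq> u" using tree_adj_in[OF T] tree_no_loop[OF T] by auto
    then have "ispath V E u [u,w]" using u uw by (simp add: ispath_def)
    with mx have "length [u,w] \<le> length vs" by blast
    with vsu show False by simp
  qed
  define l where "l = vs!(L-1)"
  define p where "p = vs!(L-2)"
  have lV: "l \<in> V" and pV: "p \<in> V" using sub L2 by (auto simp: l_def p_def L_def)
  have "hd vs = vs!0" using ne by (simp add: hd_conv_nth)
  moreover have "vs!(L-1) \<noteq> vs!0" using nth_eq_iff_index_eq[OF dist, of "L-1" 0] L2 ne by (simp add: L_def)
  ultimately have lu: "l \<noteq> u" using hd by (simp add: l_def)
  have "adj E p l" using ad[of "L-2"] L2 by (simp add: p_def l_def Suc_diff_Suc numeral_2_eq_2)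
  then have lpE: "{l,p} \<in> E" by (simp add: adj_def insert_commute)
  have leaf: "\<forall>w. adj E l w \<longrightarrow> w = p"
  proof (intro allI impI)
    fix w assume lw: "adj E l w"
    then have wV: "w \<in> V" using tree_adj_in[OF T] by auto
    show "w = p"
    proof (cases "w \<in> set vs")
      case False
      have "ispath V E u (vs @ [w])"
        unfolding ispath_def
      proof (intro conjI allI impI)
        show "vs @ [w] \<noteq> []" by simp
        show "hd (vs @ [w]) = u" using ne hd by simp
        show "distinct (vs @ [w])" using dist False by simp
        show "set (vs @ [w]) \<subseteq> V" using sub wV by simp
        fix k assume k: "k < length (vs @ [w]) - 1"
        show "adj E ((vs @ [w]) ! k) ((vs @ [w]) ! Suc k)"
        proof (cases "k < L - 1")
          case True
          then have "k < length vs" "Suc k < length vs" by (auto simp: L_def)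
          then show ?thesis using ad[OF True] by (simp add: nth_append)
        next
          case False
          then have "k = L - 1" using k by (simp add: L_def)
          then have k1: "k < length vs" and k2: "Suc k = length vs" using L2 unfolding L_def by linarith+
          have "(vs @ [w]) ! k = l" using k1 \<open>k = L - 1\<close> by (simp add: nth_append l_def)
          moreover have "(vs @ [w]) ! Suc k = w" using k2 by (metis nth_append_length)
          ultimately show ?thesis using lw by simp
        qed
      qed
      with mx have "length (vs @ [w]) \<le> length vs" by blast
      then show ?thesis by simp
    next
      case True
      then obtain k where k: "k < L" "vs!k = w" by (auto simp: in_set_conv_nth L_def)
      consider "k = L-1" | "k = L-2" | "k < L-2" using k(1) by linarith
      then show ?thesis
      proof cases
        case 1 then show ?thesis using lw k tree_no_loop[OF T] by (simp add: l_def)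
      next
        case 2 then show ?thesis using k by (simp add: p_def)
      next
        case 3
        have "is_cycle E (drop k vs)"
          unfolding is_cycle_def
        proof (intro conjI allI impI)
          show "3 \<le> length (drop k vs)" using 3 by (simp add: L_def)
          show "distinct (drop k vs)" using dist by simp
          fix j assume j: "j < length (drop k vs) - 1"
          show "adj E (drop k vs ! j) (drop k vs ! Suc j)"
            using ad[of "k+j"] j 3 by (simp add: L_def)
        next
          have "last (drop k vs) = l" using k ne by (simp add: last_conv_nth l_def L_def)
          moreover have "hd (drop k vs) = w" using k by (simp add: hd_drop_conv_nth L_def)
          ultimately show "adj E (last (drop k vs)) (hd (drop k vs))" using lw by simp
        qed
        then show ?thesis using T by (auto simp: tree_def)
      qed
    qed
  qed
  show ?thesis using lV lu pV lpE leaf by blast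
qed

lemma leaf_edge:
  assumes T: "tree V E" and leaf: "\<forall>w. adj E l w \<longrightarrow> w = p" and e: "e \<in> E" "l \<in> e"
  shows "e = {l,p}"
proof -
  have "card e = 2" using T e by (auto simp: tree_def)
  then obtain a b where ab: "e = {a,b}" "a \<noteq> b" by (auto simp: card_2_iff)
  show ?thesis
  proof (cases "l = a")
    case True
    then have "adj E l b" using e ab by (simp add: adj_def)
    then show ?thesis using leaf ab True by auto
  next
    case False
    then have "l = b" using e ab by auto
    then have "adj E l a" using e ab by (simp add: adj_def insert_commute)
    then show ?thesis using leaf ab \<open>l = b\<close> by auto
  qed
qed

lemma reach_avoid:
  assumes "(adj E)\<^sup>*\<^sup>* u y" "u \<noteq> l" and leaf: "\<forall>w. adj E l w \<longrightarrow> w = p"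
    and noloop: "\<not> adj E l l"
  shows "(y \<noteq> l \<longrightarrow> (adj (E - {{l,p}}))\<^sup>*\<^sup>* u y) \<and> (y = l \<longrightarrow> (adj (E - {{l,p}}))\<^sup>*\<^sup>* u p)"
  using assms(1)
proof induction
  case base then show ?case using \<open>u \<noteq> l\<close> by simp
next
  case (step y z)
  show ?case
  proof (cases "y = l")
    case True
    then have "z = p" using step leaf by auto
    moreover have "z \<noteq> l" using True step noloop by auto
    ultimately show ?thesis using step True by auto
  next
    case False
    show ?thesis
    proof (cases "z = l")
      case True
      then have "y = p" using step leaf adj_sym by metis
      then show ?thesis using step False True by auto
    next
      case False2: False
      have "adj (E - {{l,p}}) y z" using step(2) False False2 by (auto simp: adj_def doubleton_eq_iff)
      then show ?thesis using step False False2 by (auto intro: rtranclp.rtrancl_into_rtrancl)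
    qed
  qed
qed

lemma tree_remove:
  assumes T: "tree V E" and u: "u \<in> V" and lu: "l \<noteq> u" and lV: "l \<in> V"
    and lpE: "{l,p} \<in> E" and leaf: "\<forall>w. adj E l w \<longrightarrow> w = p"
  shows "tree (V - {l}) (E - {{l,p}})"
proof -
  have nl: "\<And>e. e \<in> E - {{l,p}} \<Longrightarrow> l \<notin> e" using leaf_edge[OF T leaf] by blast
  have g: "graph (V - {l}) (E - {{l,p}})"
    using T nl unfolding tree_def graph_def by blast
  have c: "connected_graph (V - {l}) (E - {{l,p}})"
    unfolding connected_graph_def
  proof (intro ballI)
    fix x y assume x: "x \<in> V - {l}" and y: "y \<in> V - {l}"
    have "(adj E)\<^sup>*\<^sup>* u x" "(adj E)\<^sup>*\<^sup>* u y" using T u x y by (auto simp: tree_def connected_graph_def)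
    then have "(adj (E - {{l,p}}))\<^sup>*\<^sup>* u x" "(adj (E - {{l,p}}))\<^sup>*\<^sup>* u y"
      using reach_avoid[OF _ lu[symmetric] leaf tree_no_loop[OF T]] x y by auto
    then show "(adj (E - {{l,p}}))\<^sup>*\<^sup>* x y" by (meson rtc_sym rtranclp_trans)
  qed
  have nc: "\<nexists>vs. is_cycle (E - {{l,p}}) vs"
  proof
    assume "\<exists>vs. is_cycle (E - {{l,p}}) vs"
    then obtain vs where "is_cycle (E - {{l,p}}) vs" by blast
    then have "is_cycle E vs" by (auto simp: is_cycle_def adj_def)
    then show False using T by (auto simp: tree_def)
  qed
  show ?thesis using g c nc T u lu unfolding tree_def by auto
qed


lemma tree_sum:
  fixes g :: "nat set \<Rightarrow> real"
  assumes g0: "\<And>A. g A \<ge> 0" and gs: "\<And>a. a \<in> {1..n} \<Longrightarrow> (\<Sum>b=1..n. g {a,b}) \<le> C"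
    and C: "C \<ge> 0"
  shows "tree V E \<Longrightarrow> u \<in> V \<Longrightarrow> i \<in> {1..n} \<Longrightarrow>
    (\<Sum>F\<in>{F \<in> V \<rightarrow>\<^sub>E {1..n}. F u = i}. \<Prod>e\<in>E. g (F ` e)) \<le> C ^ card E"
proof (induction "card V" arbitrary: V E rule: less_induct)
  case less
  note T = less.prems(1) and u = less.prems(2) and i = less.prems(3)
  show ?case
  proof (cases "V = {u}")
    case True
    have E: "E = {}"
    proof (rule ccontr)
      assume "E \<noteq> {}"
      then obtain e where e: "e \<in> E" by blast
      have TT: "graph V E" "\<forall>e\<in>E. card e = 2" using T by (simp_all add: tree_def)
      then have "e \<subseteq> {u}" "card e = 2" using e True unfolding graph_def by blast+
      then have "card e \<le> card {u}" by (intro card_mono) auto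
      then show False using \<open>card e = 2\<close> by simp
    qed
    have "{F \<in> V \<rightarrow>\<^sub>E {1..n}. F u = i} \<subseteq> {\<lambda>x. if x = u then i else undefined}"
    proof
      fix F assume "F \<in> {F \<in> V \<rightarrow>\<^sub>E {1..n}. F u = i}"
      then have F: "F \<in> V \<rightarrow>\<^sub>E {1..n}" "F u = i" by simp_all
      have "F = (\<lambda>x. if x = u then i else undefined)"
      proof
        fix x show "F x = (if x = u then i else undefined)"
          using F True by (cases "x = u") (auto intro: PiE_arb)
      qed
      then show "F \<in> {\<lambda>x. if x = u then i else undefined}" by simp
    qed
    then have "card {F \<in> V \<rightarrow>\<^sub>E {1..n}. F u = i} \<le> card {\<lambda>x. if x = u then i else undefined}"
      by (intro card_mono) simp_all
    then have "card {F \<in> V \<rightarrow>\<^sub>E {1..n}. F u = i} \<le> 1" by simp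
    moreover have "(\<Sum>F\<in>{F \<in> V \<rightarrow>\<^sub>E {1..n}. F u = i}. \<Prod>e\<in>E. g (F ` e))
       = real (card {F \<in> V \<rightarrow>\<^sub>E {1..n}. F u = i})" using E by simp
    ultimately show ?thesis using E by simp
  next
    case False
    then obtain v where v: "v \<in> V" "v \<noteq> u" using u by auto
    obtain l p where lp: "l \<in> V" "l \<noteq> u" "p \<in> V" "{l,p} \<in> E" and leaf: "\<forall>w. adj E l w \<longrightarrow> w = p"
      using tree_leaf[OF T u v] by blast
    define V' where "V' = V - {l}"
    define E' where "E' = E - {{l,p}}"
    have T': "tree V' E'" unfolding V'_def E'_def using tree_remove[OF T u lp(2) lp(1) lp(4) leaf] .
    have finV: "finite V" and finE: "finite E" using tree_finite[OF T] by auto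
    have cardV: "card V' < card V" unfolding V'_def using finV lp(1) by (meson card_Diff1_less)
    have u': "u \<in> V'" using u lp by (simp add: V'_def)
    have pl: "p \<noteq> l" using tree_no_loop[OF T] lp(4) by (auto simp: adj_def)
    have p': "p \<in> V'" using lp pl by (simp add: V'_def)
    have cardE: "card E = Suc (card E')" unfolding E'_def using finE lp(4)
      using card_Suc_Diff1[OF finE lp(4)] by simp
    have nl: "\<And>e. e \<in> E' \<Longrightarrow> l \<notin> e" using leaf_edge[OF T leaf] by (auto simp: E'_def)
    have lV': "l \<notin> V'" by (simp add: V'_def)
    have IH: "(\<Sum>F\<in>{F \<in> V' \<rightarrow>\<^sub>E {1..n}. F u = i}. \<Prod>e\<in>E'. g (F ` e)) \<le> C ^ card E'"
      using less.hyps[OF cardV T' u' i] .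
    define S where "S = {F \<in> V \<rightarrow>\<^sub>E {1..n}. F u = i}"
    define S' where "S' = {F \<in> V' \<rightarrow>\<^sub>E {1..n}. F u = i}"
    have finS': "finite S'" unfolding S'_def
      by (rule finite_subset[OF _ finite_PiE[of V' "\<lambda>_. {1..n}"]]) (use finV in \<open>auto simp: V'_def\<close>)
    have VV: "V = insert l V'" using lp(1) by (auto simp: V'_def)
    have bij: "bij_betw (\<lambda>(F',b). F'(l:=b)) (S' \<times> {1..n}) S"
    proof (rule bij_betwI')
      fix x y assume x: "x \<in> S' \<times> {1..n}" and y: "y \<in> S' \<times> {1..n}"
      obtain F b where xx: "x = (F,b)" by force
      obtain G c where yy: "y = (G,c)" by force
      have "F \<in> V' \<rightarrow>\<^sub>E {1..n}" "G \<in> V' \<rightarrow>\<^sub>E {1..n}" using x y xx yy by (auto simp: S'_def)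
      then have FG: "F l = undefined" "G l = undefined" using lV' by (auto intro: PiE_arb)
      show "((\<lambda>(F',b). F'(l:=b)) x = (\<lambda>(F',b). F'(l:=b)) y) = (x = y)"
      proof
        assume "(\<lambda>(F',b). F'(l:=b)) x = (\<lambda>(F',b). F'(l:=b)) y"
        then have h: "F(l:=b) = G(l:=c)" using xx yy by simp
        then have "b = c" by (metis fun_upd_same)
        moreover have "F = G"
        proof
          fix z show "F z = G z"
          proof (cases "z = l")
            case True then show ?thesis using FG by simp
          next
            case False then show ?thesis using fun_cong[OF h, of z] by simp
          qed
        qed
        ultimately show "x = y" using xx yy by simp
      qed simp
    next
      fix x assume x: "x \<in> S' \<times> {1..n}"
      then show "(\<lambda>(F',b). F'(l:=b)) x \<in> S"
        using lp(2) by (auto simp: S'_def S_def VV PiE_def extensional_def)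
    next
      fix F assume F: "F \<in> S"
      show "\<exists>x\<in>S' \<times> {1..n}. F = (\<lambda>(F',b). F'(l:=b)) x"
      proof (intro bexI)
        show "F = (\<lambda>(F',b). F'(l:=b)) (F(l:=undefined), F l)" by simp
        show "(F(l:=undefined), F l) \<in> S' \<times> {1..n}"
          using F lp(1,2) by (auto simp: S'_def S_def V'_def PiE_def extensional_def)
      qed
    qed
    have key: "(\<Prod>e\<in>E. g (F(l:=b) ` e)) = g {F p, b} * (\<Prod>e\<in>E'. g (F ` e))" for F b
    proof -
      have "(\<Prod>e\<in>E. g (F(l:=b) ` e)) = g (F(l:=b) ` {l,p}) * (\<Prod>e\<in>E'. g (F(l:=b) ` e))"
        unfolding E'_def using finE lp(4) by (simp add: prod.remove)
      also have "F(l:=b) ` {l,p} = {F p, b}" using pl by auto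
      also have "(\<Prod>e\<in>E'. g (F(l:=b) ` e)) = (\<Prod>e\<in>E'. g (F ` e))"
      proof (rule prod.cong[OF refl])
        fix e assume "e \<in> E'"
        then have "l \<notin> e" by (rule nl)
        then have "F(l:=b) ` e = F ` e" by (auto intro!: image_cong)
        then show "g (F(l:=b) ` e) = g (F ` e)" by simp
      qed
      finally show ?thesis .
    qed
    have "(\<Sum>F\<in>S. \<Prod>e\<in>E. g (F ` e)) = (\<Sum>x\<in>S' \<times> {1..n}. \<Prod>e\<in>E. g ((\<lambda>(F',b). F'(l:=b)) x ` e))"
      using sum.reindex_bij_betw[OF bij, of "\<lambda>F. \<Prod>e\<in>E. g (F ` e)"] by simp
    also have "\<dots> = (\<Sum>F\<in>S'. \<Sum>b\<in>{1..n}. \<Prod>e\<in>E. g (F(l:=b) ` e))"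
      by (simp add: sum.cartesian_product split_def)
    also have "\<dots> = (\<Sum>F\<in>S'. (\<Prod>e\<in>E'. g (F ` e)) * (\<Sum>b\<in>{1..n}. g {F p, b}))"
      unfolding key by (simp add: sum_distrib_left mult.commute)
    also have "\<dots> \<le> (\<Sum>F\<in>S'. (\<Prod>e\<in>E'. g (F ` e)) * C)"
    proof (rule sum_mono)
      fix F assume "F \<in> S'"
      then have "F p \<in> {1..n}" using p' by (auto simp: S'_def PiE_def)
      then show "(\<Prod>e\<in>E'. g (F ` e)) * (\<Sum>b\<in>{1..n}. g {F p, b}) \<le> (\<Prod>e\<in>E'. g (F ` e)) * C"
        using gs[of "F p"] by (intro mult_left_mono) (auto intro: prod_nonneg g0)
    qed
    also have "\<dots> = (\<Sum>F\<in>S'. \<Prod>e\<in>E'. g (F ` e)) * C" by (simp add: sum_distrib_right)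
    also have "\<dots> \<le> C ^ card E' * C" using IH C by (intro mult_right_mono) (auto simp: S'_def)
    also have "\<dots> = C ^ card E" using cardE by simp
    finally show ?thesis by (simp add: S_def)
  qed
qed


theorem lemma3p1:
  fixes M :: "'a measure" and W :: "nat \<Rightarrow> nat \<Rightarrow> nat \<Rightarrow> 'a \<Rightarrow> complex"
    and C :: real and V :: "'v set" and E :: "'v set set"
    and m n i :: nat and u :: 'v
  assumes P: "prob_space M"
    and meas: "\<And>n i j. i \<in> {1..n} \<Longrightarrow> j \<in> {1..n} \<Longrightarrow> W n i j \<in> borel_measurable M"
    and herm: "\<And>n i j x. i \<in> {1..n} \<Longrightarrow> j \<in> {1..n} \<Longrightarrow> W n j i x = cnj (W n i j x)"
    and indep: "\<And>n. prob_space.indep_vars M (\<lambda>_. borel) (\<lambda>p. W n (fst p) (snd p))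
                       {(i, j). 1 \<le> i \<and> i \<le> j \<and> j \<le> n}"
    and mean0: "\<And>n i j. i \<in> {1..n} \<Longrightarrow> j \<in> {1..n} \<Longrightarrow> (\<integral>x. W n i j x \<partial>M) = 0"
    and finvar: "\<And>n i j. i \<in> {1..n} \<Longrightarrow> j \<in> {1..n} \<Longrightarrow>
                   integrable M (\<lambda>x. (cmod (W n i j x))\<^sup>2)"
    and C: "C \<ge> 0"
    and rowsum: "\<And>n i. i \<in> {1..n} \<Longrightarrow> (\<Sum>j = 1..n. cvariance M (W n i j)) \<le> C"
    and T: "tree V E" and m: "card E = m"
    and u: "u \<in> V" and i: "i \<in> {1..n}"
  shows "(\<Sum>F \<in> {F \<in> injs V n. F u = i}. Pw M W n E F) \<le> C ^ m"
proof -
  define g where "g A = cvariance M (W n (Min A) (Max A))" for A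
  have cv0: "cvariance M X \<ge> 0" for X by (simp add: cvariance_def)
  have sym: "cvariance M (W n b a) = cvariance M (W n a b)" if "a \<in> {1..n}" "b \<in> {1..n}" for a b
  proof -
    have "(\<lambda>x. (cmod (W n b a x - (\<integral>y. W n b a y \<partial>M)))\<^sup>2) = (\<lambda>x. (cmod (W n a b x - (\<integral>y. W n a b y \<partial>M)))\<^sup>2)"
      using mean0[OF that] mean0[OF that(2,1)] herm[OF that] by simp
    then show ?thesis by (simp add: cvariance_def)
  qed
  have gs: "(\<Sum>b=1..n. g {a,b}) \<le> C" if a: "a \<in> {1..n}" for a
  proof -
    have "(\<Sum>b=1..n. g {a,b}) = (\<Sum>b=1..n. cvariance M (W n a b))"
    proof (rule sum.cong[OF refl])
      fix b assume b: "b \<in> {1..n}"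
      show "g {a,b} = cvariance M (W n a b)"
      proof (cases "a \<le> b")
        case True then show ?thesis by (simp add: g_def min_def max_def)
      next
        case False then show ?thesis using sym[OF a b] by (simp add: g_def min_def max_def)
      qed
    qed
    then show ?thesis using rowsum[OF a] by simp
  qed
  have g0: "\<And>A. g A \<ge> 0" by (simp add: g_def cv0)
  have main: "(\<Sum>F\<in>{F \<in> V \<rightarrow>\<^sub>E {1..n}. F u = i}. \<Prod>e\<in>E. g (F ` e)) \<le> C ^ card E"
    by (rule tree_sum[OF g0 gs C T u i])
  have PwE: "Pw M W n E F = (\<Prod>e\<in>E. g (F ` e))" for F by (simp add: Pw_def g_def)
  have finV: "finite V" using tree_finite[OF T] by simp
  have "(\<Sum>F \<in> {F \<in> injs V n. F u = i}. Pw M W n E F) \<le> (\<Sum>F\<in>{F \<in> V \<rightarrow>\<^sub>E {1..n}. F u = i}. Pw M W n E F)"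
  proof (rule sum_mono2)
    show "finite {F \<in> V \<rightarrow>\<^sub>E {1..n}. F u = i}"
      by (rule finite_subset[OF _ finite_PiE[of V "\<lambda>_. {1..n}"]]) (use finV in auto)
    show "{F \<in> injs V n. F u = i} \<subseteq> {F \<in> V \<rightarrow>\<^sub>E {1..n}. F u = i}" by (auto simp: injs_def)
    show "0 \<le> Pw M W n E F" for F unfolding PwE by (intro prod_nonneg) (simp add: g_def cv0)
  qed
  also have "\<dots> \<le> C ^ m" using main m by (simp add: PwE)
  finally show ?thesis .
qed

end
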